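(* Let $n\ge 3$ and let $g$ be a prime power such that $g\ge n$ if $g$ is even and $g\ge n+1$ if $g$ is odd. Then there exists a $\mathrm{TOC}_{g+1}(n,4,3)$.
   Context: $\mathcal{H}_q(n,w)$ is the set of all words of length $n$ over $\mathbb{Z}_q$ with exactly $w$ nonzero entries, with the Hamming distance. An $(n,d,w)_q$-code is a nonempty subset of $\mathcal{H}_q(n,w)$ in which any two distinct words have Hamming distance at least $d$; $A_q(n,d,w)$ is the maximum size of such a code and a code of this size is optimal. A $\mathrm{TOC}_q(n,d,w)$ is a partition of $\mathcal{H}_q(n,w)$ into mutually disjoint optimal $(n,d,w)_q$-codes. *)

theory Defs
  imports Main "HOL-Number_Theory.Prime_Powers" "HOL-Library.Disjoint_Sets"
begin

text \<open>Words of length n over Z_q are represented as functions nat => nat with values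
  in {0..<q} on positions 0..<n and value 0 outside (canonical representation).\<close>

definition Hq :: "nat \<Rightarrow> nat \<Rightarrow> nat \<Rightarrow> (nat \<Rightarrow> nat) set" where
  "Hq q n w = {x. (\<forall>i<n. x i < q) \<and> (\<forall>i\<ge>n. x i = 0) \<and> card {i. i < n \<and> x i \<noteq> 0} = w}"

definition hdist :: "nat \<Rightarrow> (nat \<Rightarrow> nat) \<Rightarrow> (nat \<Rightarrow> nat) \<Rightarrow> nat" where
  "hdist n x y = card {i. i < n \<and> x i \<noteq> y i}"

definition is_code :: "nat \<Rightarrow> nat \<Rightarrow> nat \<Rightarrow> nat \<Rightarrow> (nat \<Rightarrow> nat) set \<Rightarrow> bool" where
  "is_code q n d w C \<longleftrightarrow> C \<noteq> {} \<and> C \<subseteq> Hq q n w \<and>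
     (\<forall>x\<in>C. \<forall>y\<in>C. x \<noteq> y \<longrightarrow> d \<le> hdist n x y)"

definition Aq :: "nat \<Rightarrow> nat \<Rightarrow> nat \<Rightarrow> nat \<Rightarrow> nat" where
  "Aq q n d w = Max (card ` {C. is_code q n d w C})"

definition optimal_code :: "nat \<Rightarrow> nat \<Rightarrow> nat \<Rightarrow> nat \<Rightarrow> (nat \<Rightarrow> nat) set \<Rightarrow> bool" where
  "optimal_code q n d w C \<longleftrightarrow> is_code q n d w C \<and> card C = Aq q n d w"

definition TOC :: "nat \<Rightarrow> nat \<Rightarrow> nat \<Rightarrow> nat \<Rightarrow> (nat \<Rightarrow> nat) set set \<Rightarrow> bool" where
  "TOC q n d w P \<longleftrightarrow> partition_on (Hq q n w) P \<and> (\<forall>C\<in>P. optimal_code q n d w C)"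

end

theory Submission
  imports Defs "HOL-Number_Theory.Residues" "HOL-Algebra.Algebraic_Closure"
begin


lemma (in cring) binomial_alg:
  assumes a: "a \<in> carrier R" and b: "b \<in> carrier R"
  shows "(a \<oplus> b) [^] (n::nat) = (\<Oplus>i\<in>{..n}. [(n choose i)] \<cdot> (a [^] i \<otimes> b [^] (n - i)))"
proof (induction n)
  case 0
  then show ?case using a b by simp
next
  case (Suc n)
  define t where "t = (\<lambda>n i. [(n choose i)] \<cdot> (a [^] i \<otimes> b [^] (n - i)))"
  define u where "u = (\<lambda>i. [(n choose i)] \<cdot> (a [^] i \<otimes> b [^] (Suc n - i)))"
  define v where "v = (\<lambda>i. [(n choose Suc i)] \<cdot> (a [^] Suc i \<otimes> b [^] (n - i)))"
  define w where "w = (\<lambda>i. [(n choose i)] \<cdot> (a [^] Suc i \<otimes> b [^] (n - i)))"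
  have tc: "t m \<in> A \<rightarrow> carrier R" for m A using a b by (auto simp: t_def)
  have uc: "u \<in> A \<rightarrow> carrier R" for A using a b by (auto simp: u_def)
  have vc: "v \<in> A \<rightarrow> carrier R" for A using a b by (auto simp: v_def)
  have wc: "w \<in> A \<rightarrow> carrier R" for A using a b by (auto simp: w_def)
  have "(a \<oplus> b) [^] Suc n = (\<Oplus>i\<in>{..n}. t n i) \<otimes> (a \<oplus> b)"
    using Suc a b by (simp add: t_def)
  also have "\<dots> = (\<Oplus>i\<in>{..n}. t n i \<otimes> a) \<oplus> (\<Oplus>i\<in>{..n}. t n i \<otimes> b)"
    using a b tc by (simp add: r_distr finsum_closed finsum_ldistr)
  also have "(\<Oplus>i\<in>{..n}. t n i \<otimes> a) = (\<Oplus>i\<in>{..n}. w i)"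
    using a b by (intro finsum_cong) (auto simp: t_def w_def add_pow_ldistr m_assoc nat_pow_Suc2 m_comm[OF nat_pow_closed[OF b] a])
  also have "(\<Oplus>i\<in>{..n}. t n i \<otimes> b) = (\<Oplus>i\<in>{..n}. u i)"
    using a b by (intro finsum_cong) (auto simp: t_def u_def add_pow_ldistr m_assoc Suc_diff_le nat_pow_Suc2)
  also have "(\<Oplus>i\<in>{..n}. u i) = (\<Oplus>i\<in>{..Suc n}. u i)"
  proof -
    have "u (Suc n) = \<zero>" by (simp add: u_def binomial_eq_0 add_pow_def)
    then show ?thesis using uc[of "{..Suc n}"] uc[of "{..n}"] by (simp add: finsum_closed)
  qed
  also have "\<dots> = (\<Oplus>i\<in>{..n}. v i) \<oplus> u 0"
    using uc by (subst finsum_Suc2) (auto simp: u_def v_def intro!: finsum_cong')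
  finally have 1: "(a \<oplus> b) [^] Suc n = (\<Oplus>i\<in>{..n}. w i) \<oplus> ((\<Oplus>i\<in>{..n}. v i) \<oplus> u 0)" .
  have "(\<Oplus>i\<in>{..Suc n}. t (Suc n) i) = (\<Oplus>i\<in>{..n}. t (Suc n) (Suc i)) \<oplus> t (Suc n) 0"
    using tc by (subst finsum_Suc2) auto
  also have "(\<Oplus>i\<in>{..n}. t (Suc n) (Suc i)) = (\<Oplus>i\<in>{..n}. w i \<oplus> v i)"
    using a b by (intro finsum_cong) (auto simp: t_def w_def v_def add.nat_pow_mult)
  also have "\<dots> = (\<Oplus>i\<in>{..n}. w i) \<oplus> (\<Oplus>i\<in>{..n}. v i)"
    using wc vc by (simp add: finsum_addf)
  also have "t (Suc n) 0 = u 0" by (simp add: t_def u_def)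
  finally have 2: "(\<Oplus>i\<in>{..Suc n}. t (Suc n) i) = (\<Oplus>i\<in>{..n}. w i) \<oplus> (\<Oplus>i\<in>{..n}. v i) \<oplus> u 0" .
  have "u 0 \<in> carrier R" using uc by auto
  then show ?case unfolding 1 using 2 wc vc by (simp add: t_def a_assoc finsum_closed)
qed

lemma (in cring) char_mult_zero:
  assumes "[(p::nat)] \<cdot> \<one> = \<zero>" and "x \<in> carrier R" and "p dvd m"
  shows "[m] \<cdot> x = \<zero>"
proof -
  obtain k where m: "m = p * k" using assms(3) by auto
  have "[p] \<cdot> x = \<zero>"
    using add_pow_ldistr[of \<one> x p] assms by simp
  then have "[k] \<cdot> ([p] \<cdot> x) = \<zero>" by simp
  then show ?thesis using m assms(2) by (simp add: add.nat_pow_pow)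
qed

lemma (in cring) frobenius:
  assumes p: "Factorial_Ring.prime p" and ch: "[(p::nat)] \<cdot> \<one> = \<zero>"
    and a: "a \<in> carrier R" and b: "b \<in> carrier R"
  shows "(a \<oplus> b) [^] p = a [^] p \<oplus> b [^] p"
proof -
  define t where "t = (\<lambda>i. [(p choose i)] \<cdot> (a [^] i \<otimes> b [^] (p - i)))"
  have tc: "t \<in> A \<rightarrow> carrier R" for A using a b by (auto simp: t_def)
  have p0: "p \<noteq> 0" using p by auto
  have "(a \<oplus> b) [^] p = (\<Oplus>i\<in>{..p}. t i)"
    unfolding t_def by (rule binomial_alg[OF a b])
  also have "\<dots> = (\<Oplus>i\<in>{0, p}. t i)"
  proof (rule add.finprod_mono_neutral_cong_right)
    show "finite {..p}" by simp
    show "{0, p} \<subseteq> {..p}" by auto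
    show "t i = \<zero>" if "i \<in> {..p} - {0, p}" for i
    proof -
      from that have "0 < i" "i < p" by auto
      then have dv: "p dvd (p choose i)" using dvd_choose_prime[of i p] p by auto
      show "t i = \<zero>" unfolding t_def
        using char_mult_zero[OF ch _ dv] a b by auto
    qed
  qed (use tc in auto)
  also have "\<dots> = t 0 \<oplus> t p"
    using tc[of "{0,p}"] tc[of "{p}"] p0 by (subst finsum_insert) auto
  also have "\<dots> = a [^] p \<oplus> b [^] p"
    using a b by (simp add: t_def a_comm)
  finally show ?thesis .
qed

lemma (in cring) frobenius_pow:
  assumes p: "Factorial_Ring.prime p" and ch: "[(p::nat)] \<cdot> \<one> = \<zero>"
    and a: "a \<in> carrier R" and b: "b \<in> carrier R"
  shows "(a \<oplus> b) [^] (p ^ k) = a [^] (p ^ k) \<oplus> b [^] (p ^ k)"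
proof (induction k)
  case 0
  then show ?case using a b by simp
next
  case (Suc k)
  have "(a \<oplus> b) [^] (p ^ Suc k) = ((a \<oplus> b) [^] (p ^ k)) [^] p"
    using a b by (simp add: nat_pow_pow mult.commute)
  also have "\<dots> = (a [^] (p ^ k)) [^] p \<oplus> (b [^] (p ^ k)) [^] p"
    using Suc frobenius[OF p ch] a b by simp
  also have "\<dots> = a [^] (p ^ Suc k) \<oplus> b [^] (p ^ Suc k)"
    using a b by (simp add: nat_pow_pow mult.commute)
  finally show ?case .
qed

lemma hom_add_pow_nat:
  assumes "h \<in> ring_hom A B" "ring A" "ring B" "x \<in> carrier A"
  shows "h ([(n::nat)] \<cdot>\<^bsub>A\<^esub> x) = [n] \<cdot>\<^bsub>B\<^esub> (h x)"
proof -
  interpret ring_hom_ring A B h using assms by (intro ring_hom_ringI2) auto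
  show ?thesis
    by (induction n) (use assms(4) in \<open>auto simp: R.add.nat_pow_Suc\<close>)
qed

context algebraically_closed
begin

lemma P_char:
  assumes ch: "[(p::nat)] \<cdot> \<one> = \<zero>"
  shows "[p] \<cdot>\<^bsub>poly_ring L\<^esub> \<one>\<^bsub>poly_ring L\<^esub> = \<zero>\<^bsub>poly_ring L\<^esub>"
proof -
  interpret P: domain "poly_ring L"
    using univ_poly_is_domain[OF carrier_is_subring] .
  have hom: "ring_hom_ring L (poly_ring L) poly_of_const"
    using canonical_embedding_ring_hom[OF carrier_is_subring] by simp
  interpret H: ring_hom_ring L "poly_ring L" poly_of_const using hom .
  have "poly_of_const ([p] \<cdot> \<one>) = [p] \<cdot>\<^bsub>poly_ring L\<^esub> poly_of_const \<one>"
    using hom_add_pow_nat[OF H.homh] is_ring P.ring_axioms by simp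
  then show ?thesis using ch by simp
qed

lemma card_fixed_q:
  assumes p: "Factorial_Ring.prime p" and ch: "[(p::nat)] \<cdot> \<one> = \<zero>" and k: "k \<ge> 1"
  shows "card {x \<in> carrier L. x [^] (p ^ k) = x} = p ^ k"
proof -
  interpret P: domain "poly_ring L"
    using univ_poly_is_domain[OF carrier_is_subring] .
  define q where "q = p ^ k"
  have q2: "q \<ge> 2"
  proof -
    have "p \<ge> 2" using p by (simp add: prime_ge_2_nat)
    moreover have "p ^ 1 \<le> p ^ k" using k \<open>p \<ge> 2\<close> by (intro power_increasing) auto
    ultimately show ?thesis by (simp add: q_def)
  qed
  have Xc: "X \<in> carrier (poly_ring L)" using var_closed(1)[OF carrier_is_subring] .
  define f where "f = X [^]\<^bsub>poly_ring L\<^esub> q \<ominus>\<^bsub>poly_ring L\<^esub> X"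
  have fc: "f \<in> carrier (poly_ring L)" using Xc by (simp add: f_def)
  have evf: "eval f x = x [^] q \<ominus> x" if x: "x \<in> carrier L" for x
  proof -
    interpret E: ring_hom_ring "poly_ring L" L "\<lambda>p. eval p x"
      using eval_ring_hom[OF carrier_is_subring x] .
    show ?thesis using Xc x by (simp add: f_def E.hom_nat_pow eval_var a_minus_def)
  qed
  have deg: "degree f = q"
  proof -
    have m: "X [^]\<^bsub>poly_ring L\<^esub> q = monom \<one> q"
      using unitary_monom_eq_var_pow[OF carrier_is_subring] by simp
    have iX: "\<ominus>\<^bsub>poly_ring L\<^esub> X \<in> carrier (poly_ring L)" using Xc by simp
    have dX: "degree (\<ominus>\<^bsub>poly_ring L\<^esub> X) = 1"
      using univ_poly_a_inv_degree[OF carrier_is_subring Xc] by (simp add: var_def)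
    have pm: "polynomial (carrier L) (monom \<one> q)"
      using monom_is_polynomial[OF carrier_is_subring, of "\<one>" q] by auto
    have pX: "polynomial (carrier L) (\<ominus>\<^bsub>poly_ring L\<^esub> X)"
      using iX univ_poly_carrier by blast
    have "f = poly_add (monom \<one> q) (\<ominus>\<^bsub>poly_ring L\<^esub> X)"
      unfolding f_def m[symmetric] by (simp add: a_minus_def univ_poly_add)
    also have "degree \<dots> = max (degree (monom \<one> q)) (degree (\<ominus>\<^bsub>poly_ring L\<^esub> X))"
      using poly_add_degree_eq[OF carrier_is_subring pm pX] dX q2 by (simp add: monom_def)
    finally show ?thesis using dX q2 by (simp add: monom_def)
  qed
  have fne: "f \<noteq> []" using deg q2 by auto
  have mult1: "alg_mult f a \<le> 1" if a: "a \<in> carrier L" for a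
  proof (rule ccontr)
    assume "\<not> alg_mult f a \<le> 1"
    then have "2 \<le> alg_mult f a" by simp
    define Y where "Y = [\<one>, \<ominus> a]"
    have Yc: "Y \<in> carrier (poly_ring L)"
      using a unfolding Y_def sym[OF univ_poly_carrier] polynomial_def by auto
    have Yne: "Y \<noteq> \<zero>\<^bsub>poly_ring L\<^esub>" by (simp add: Y_def univ_poly_zero)
    have "(Y [^]\<^bsub>poly_ring L\<^esub> (2::nat)) pdivides f"
      using le_alg_mult_imp_pdivides[OF a fc \<open>2 \<le> alg_mult f a\<close>] by (simp add: Y_def)
    then obtain h where hc: "h \<in> carrier (poly_ring L)"
      and fh: "f = (Y [^]\<^bsub>poly_ring L\<^esub> (2::nat)) \<otimes>\<^bsub>poly_ring L\<^esub> h"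
      unfolding pdivides_def factor_def by auto
    have root: "is_root f a" using alg_mult_gt_zero_iff_is_root[OF fc] \<open>2 \<le> alg_mult f a\<close>
      by (metis less_le_trans zero_less_numeral)
    then have aq: "a [^] q = a" using evf[OF a] a by (simp add: is_root_def)
    define c where "c = poly_of_const a"
    interpret H: ring_hom_ring L "poly_ring L" poly_of_const
      using canonical_embedding_ring_hom[OF carrier_is_subring] by simp
    have cc: "c \<in> carrier (poly_ring L)" using a by (simp add: c_def)
    have YcX: "Y \<oplus>\<^bsub>poly_ring L\<^esub> c = X"
    proof (cases "a = \<zero>")
      case True
      then show ?thesis by (simp add: Y_def c_def poly_of_const_def var_def univ_poly_add)
    next
      case False
      then show ?thesis using a by (simp add: Y_def c_def poly_of_const_def var_def univ_poly_add l_neg)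
    qed
    have cq: "c [^]\<^bsub>poly_ring L\<^esub> q = c"
      using H.hom_nat_pow[OF a, of q] aq by (simp add: c_def)
    have "X [^]\<^bsub>poly_ring L\<^esub> q = Y [^]\<^bsub>poly_ring L\<^esub> q \<oplus>\<^bsub>poly_ring L\<^esub> c"
      using P.frobenius_pow[OF p P_char[OF ch] Yc cc, of k] YcX cq by (simp add: q_def)
    moreover have gen: "Z \<oplus>\<^bsub>poly_ring L\<^esub> c \<ominus>\<^bsub>poly_ring L\<^esub> (Y \<oplus>\<^bsub>poly_ring L\<^esub> c) = Z \<ominus>\<^bsub>poly_ring L\<^esub> Y"
      if "Z \<in> carrier (poly_ring L)" for Z using that Yc cc by algebra
    ultimately have fY: "f = Y [^]\<^bsub>poly_ring L\<^esub> q \<ominus>\<^bsub>poly_ring L\<^esub> Y"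
      unfolding f_def using YcX Yc by simp
    define W where "W = Y [^]\<^bsub>poly_ring L\<^esub> (q - 1)"
    have Wc: "W \<in> carrier (poly_ring L)" using Yc by (simp add: W_def)
    have "Y [^]\<^bsub>poly_ring L\<^esub> q = Y \<otimes>\<^bsub>poly_ring L\<^esub> W"
      using Yc q2 P.nat_pow_Suc2[of Y "q - 1"] by (simp add: W_def)
    then have f1: "f = Y \<otimes>\<^bsub>poly_ring L\<^esub> (W \<ominus>\<^bsub>poly_ring L\<^esub> \<one>\<^bsub>poly_ring L\<^esub>)"
      using fY Yc Wc by (simp add: P.r_distr P.r_minus a_minus_def)
    have f2: "f = Y \<otimes>\<^bsub>poly_ring L\<^esub> (Y \<otimes>\<^bsub>poly_ring L\<^esub> h)"
      using fh Yc hc by (simp add: numeral_2_eq_2 P.m_assoc)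
    have "W \<ominus>\<^bsub>poly_ring L\<^esub> \<one>\<^bsub>poly_ring L\<^esub> = Y \<otimes>\<^bsub>poly_ring L\<^esub> h"
      using P.m_lcancel[OF Yne Yc, of "W \<ominus>\<^bsub>poly_ring L\<^esub> \<one>\<^bsub>poly_ring L\<^esub>" "Y \<otimes>\<^bsub>poly_ring L\<^esub> h"]
        f1 f2 Yc Wc hc by simp
    moreover interpret E: ring_hom_ring "poly_ring L" L "\<lambda>p. eval p a"
      using eval_ring_hom[OF carrier_is_subring a] .
    have eY: "eval Y a = \<zero>"
      using monic_degree_one_root_condition[OF a, of a] a by (simp add: Y_def is_root_def r_neg)
    have "eval W a = \<zero>"
      using q2 eY Yc E.hom_nat_pow[OF Yc, of "q - 1"] by (simp add: W_def nat_pow_zero)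
    ultimately have "eval (W \<ominus>\<^bsub>poly_ring L\<^esub> \<one>\<^bsub>poly_ring L\<^esub>) a = eval (Y \<otimes>\<^bsub>poly_ring L\<^esub> h) a" by simp
    then have "\<ominus> \<one> = \<zero>"
      using eY Wc Yc hc \<open>eval W a = \<zero>\<close> by (simp add: E.hom_add E.hom_mult E.hom_a_inv a_minus_def)
    then show False by simp
  qed
  have spl: "size (roots f) = q"
    using roots_over_carrier[OF fc] deg by (simp add: splitted_def)
  have setr: "set_mset (roots f) = {x \<in> carrier L. x [^] q = x}"
  proof -
    have "x \<in># roots f \<longleftrightarrow> x \<in> carrier L \<and> x [^] q = x" for x
      using roots_mem_iff_is_root[OF fc, of x] evf[of x] fne
      by (auto simp: is_root_def r_right_minus_eq eq_commute[of "\<zero>"])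
    then show ?thesis by auto
  qed
  have cnt: "count (roots f) x = 1" if "x \<in># roots f" for x
  proof -
    have "x \<in> carrier L" using that setr by auto
    then have "count (roots f) x \<le> 1" using mult1 alg_mult_eq_count_roots[OF fc] by metis
    moreover have "count (roots f) x > 0" using that by simp
    ultimately show ?thesis by linarith
  qed
  have "size (roots f) = (\<Sum>x\<in>set_mset (roots f). count (roots f) x)"
    by (rule size_multiset_overloaded_eq)
  also have "\<dots> = card (set_mset (roots f))" using cnt by simp
  finally show ?thesis using spl setr by (simp add: q_def)
qed

lemma fixed_q_closed:
  assumes p: "Factorial_Ring.prime p" and ch: "[(p::nat)] \<cdot> \<one> = \<zero>"
    and x: "x \<in> {x \<in> carrier L. x [^] (p ^ k) = x}" and y: "y \<in> {x \<in> carrier L. x [^] (p ^ k) = x}"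
  shows "x \<oplus> y \<in> {x \<in> carrier L. x [^] (p ^ k) = x}"
    and "x \<otimes> y \<in> {x \<in> carrier L. x [^] (p ^ k) = x}"
  using x y frobenius_pow[OF p ch, of x y k] by (auto simp: nat_pow_distrib)

end

lemma residue_char:
  assumes "Factorial_Ring.prime (p::nat)"
  shows "[p] \<cdot>\<^bsub>residue_ring (int p)\<^esub> \<one>\<^bsub>residue_ring (int p)\<^esub> = \<zero>\<^bsub>residue_ring (int p)\<^esub>"
proof -
  define R where "R = residue_ring (int p)"
  interpret residues_prime p R using assms by unfold_locales (auto simp: R_def)
  have "[n] \<cdot>\<^bsub>R\<^esub> \<one>\<^bsub>R\<^esub> = int n mod int p" for n :: nat
  proof (induction n)
    case 0
    then show ?case by (simp add: res_zero_eq)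
  next
    case (Suc n)
    have "[Suc n] \<cdot>\<^bsub>R\<^esub> \<one>\<^bsub>R\<^esub> = [n] \<cdot>\<^bsub>R\<^esub> \<one>\<^bsub>R\<^esub> \<oplus>\<^bsub>R\<^esub> \<one>\<^bsub>R\<^esub>" by (simp add: add.nat_pow_Suc)
    also have "\<dots> = (int n mod int p + 1) mod int p" using Suc by (simp add: res_add_eq res_one_eq)
    also have "\<dots> = int (Suc n) mod int p" by (metis mod_add_left_eq of_nat_Suc add.commute)
    finally show ?case .
  qed
  from this[of p] show ?thesis by (simp add: res_zero_eq flip: R_def)
qed

lemma exists_GF:
  assumes p: "Factorial_Ring.prime (p::nat)" and k: "k \<ge> 1"
  shows "\<exists>(L::((int list \<times> nat) multiset \<Rightarrow> int) ring) S. field L \<and> S \<subseteq> carrier L \<and> card S = p ^ k \<and>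
     (\<forall>x\<in>S. \<forall>y\<in>S. x \<oplus>\<^bsub>L\<^esub> y \<in> S \<and> x \<otimes>\<^bsub>L\<^esub> y \<in> S)"
proof -
  define R where "R = residue_ring (int p)"
  interpret residues_prime p R using p by (unfold_locales) (auto simp: R_def)
  define L where "L = alg_closure"
  interpret L: algebraic_closure L "indexed_const ` carrier R"
    using alg_closureE(1) unfolding L_def .
  have hom: "indexed_const \<in> ring_hom R L" using alg_closureE(2) by (simp add: L_def)
  have "indexed_const ([p] \<cdot>\<^bsub>R\<^esub> \<one>\<^bsub>R\<^esub>) = [p] \<cdot>\<^bsub>L\<^esub> indexed_const \<one>\<^bsub>R\<^esub>"
    using hom_add_pow_nat[OF hom] ring_axioms L.ring_axioms by simp
  moreover have "[p] \<cdot>\<^bsub>R\<^esub> \<one>\<^bsub>R\<^esub> = \<zero>\<^bsub>R\<^esub>"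
    using residue_char[OF p] by (simp add: R_def)
  ultimately have ch: "[p] \<cdot>\<^bsub>L\<^esub> \<one>\<^bsub>L\<^esub> = \<zero>\<^bsub>L\<^esub>"
    using hom ring_hom_zero[OF hom ring_axioms L.ring_axioms] by (simp add: ring_hom_one)
  show ?thesis
    apply (rule exI[of _ L], rule exI[of _ "{x \<in> carrier L. x [^]\<^bsub>L\<^esub> (p ^ k) = x}"])
    using L.field_axioms L.card_fixed_q[OF p ch k] L.fixed_q_closed[OF p ch] by auto
qed



lemma (in field) vand3:
  assumes c: "x \<in> carrier R" "y \<in> carrier R" "z \<in> carrier R" "x' \<in> carrier R" "y' \<in> carrier R" "z' \<in> carrier R"
    and a: "a1 \<in> carrier R" "a2 \<in> carrier R" "a3 \<in> carrier R"
    and d: "a1 \<noteq> a2" "a1 \<noteq> a3" "a2 \<noteq> a3"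
    and e1: "x \<oplus> a1 \<otimes> y \<oplus> a1 \<otimes> a1 \<otimes> z = x' \<oplus> a1 \<otimes> y' \<oplus> a1 \<otimes> a1 \<otimes> z'"
    and e2: "x \<oplus> a2 \<otimes> y \<oplus> a2 \<otimes> a2 \<otimes> z = x' \<oplus> a2 \<otimes> y' \<oplus> a2 \<otimes> a2 \<otimes> z'"
    and e3: "x \<oplus> a3 \<otimes> y \<oplus> a3 \<otimes> a3 \<otimes> z = x' \<oplus> a3 \<otimes> y' \<oplus> a3 \<otimes> a3 \<otimes> z'"
  shows "x = x' \<and> y = y' \<and> z = z'"
proof -
  define u where "u = x \<ominus> x'"
  define v where "v = y \<ominus> y'"
  define w where "w = z \<ominus> z'"
  have uc: "u \<in> carrier R" "v \<in> carrier R" "w \<in> carrier R" using c by (auto simp: u_def v_def w_def)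
  have E: "u \<oplus> b \<otimes> v \<oplus> b \<otimes> b \<otimes> w = \<zero>"
    if "b \<in> carrier R" "x \<oplus> b \<otimes> y \<oplus> b \<otimes> b \<otimes> z = x' \<oplus> b \<otimes> y' \<oplus> b \<otimes> b \<otimes> z'" for b
  proof -
    have "u \<oplus> b \<otimes> v \<oplus> b \<otimes> b \<otimes> w = (x \<oplus> b \<otimes> y \<oplus> b \<otimes> b \<otimes> z) \<ominus> (x' \<oplus> b \<otimes> y' \<oplus> b \<otimes> b \<otimes> z')"
      unfolding u_def v_def w_def using c that(1) by algebra
    then show ?thesis using that(2) c that(1) by simp
  qed
  have E1: "u \<oplus> a1 \<otimes> v \<oplus> a1 \<otimes> a1 \<otimes> w = \<zero>" using E[OF a(1) e1] .
  have E2: "u \<oplus> a2 \<otimes> v \<oplus> a2 \<otimes> a2 \<otimes> w = \<zero>" using E[OF a(2) e2] .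
  have E3: "u \<oplus> a3 \<otimes> v \<oplus> a3 \<otimes> a3 \<otimes> w = \<zero>" using E[OF a(3) e3] .
  have "(a1 \<ominus> a2) \<otimes> (v \<oplus> (a1 \<oplus> a2) \<otimes> w) = 
        (u \<oplus> a1 \<otimes> v \<oplus> a1 \<otimes> a1 \<otimes> w) \<ominus> (u \<oplus> a2 \<otimes> v \<oplus> a2 \<otimes> a2 \<otimes> w)"
    using uc a by algebra
  then have "(a1 \<ominus> a2) \<otimes> (v \<oplus> (a1 \<oplus> a2) \<otimes> w) = \<zero>" using E1 E2 by simp
  moreover have "a1 \<ominus> a2 \<noteq> \<zero>" using d a by simp
  ultimately have F1: "v \<oplus> (a1 \<oplus> a2) \<otimes> w = \<zero>" using integral uc a by blast
  have "(a1 \<ominus> a3) \<otimes> (v \<oplus> (a1 \<oplus> a3) \<otimes> w) = 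
        (u \<oplus> a1 \<otimes> v \<oplus> a1 \<otimes> a1 \<otimes> w) \<ominus> (u \<oplus> a3 \<otimes> v \<oplus> a3 \<otimes> a3 \<otimes> w)"
    using uc a by algebra
  then have "(a1 \<ominus> a3) \<otimes> (v \<oplus> (a1 \<oplus> a3) \<otimes> w) = \<zero>" using E1 E3 by simp
  moreover have "a1 \<ominus> a3 \<noteq> \<zero>" using d a by simp
  ultimately have F2: "v \<oplus> (a1 \<oplus> a3) \<otimes> w = \<zero>" using integral uc a by blast
  have "(a2 \<ominus> a3) \<otimes> w = (v \<oplus> (a1 \<oplus> a2) \<otimes> w) \<ominus> (v \<oplus> (a1 \<oplus> a3) \<otimes> w)"
    using uc a by algebra
  then have "(a2 \<ominus> a3) \<otimes> w = \<zero>" using F1 F2 by simp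
  moreover have "a2 \<ominus> a3 \<noteq> \<zero>" using d a by simp
  ultimately have w0: "w = \<zero>" using integral uc a by blast
  then have v0: "v = \<zero>" using F1 uc a by simp
  then have u0: "u = \<zero>" using E1 w0 uc a by simp
  show ?thesis using u0 v0 w0 c by (simp add: u_def v_def w_def)
qed

locale toc_setup = field L for L (structure) +
  fixes S :: "'a set" and g n :: nat and sig :: "nat \<Rightarrow> 'a"
  assumes S_sub: "S \<subseteq> carrier L"
    and S_add: "\<And>x y. x \<in> S \<Longrightarrow> y \<in> S \<Longrightarrow> x \<oplus> y \<in> S"
    and S_mult: "\<And>x y. x \<in> S \<Longrightarrow> y \<in> S \<Longrightarrow> x \<otimes> y \<in> S"
    and bij: "bij_betw sig {0..<g} S"
    and n3: "3 \<le> n" and ng: "n \<le> g"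
begin

definition lam :: "'a \<times> 'a \<times> 'a \<Rightarrow> 'a \<Rightarrow> 'a" where
  "lam c a = fst c \<oplus> a \<otimes> fst (snd c) \<oplus> a \<otimes> a \<otimes> snd (snd c)"
definition iota :: "'a \<Rightarrow> nat" where "iota = the_inv_into {0..<g} sig"
definition val :: "'a \<times> 'a \<times> 'a \<Rightarrow> nat set \<Rightarrow> nat \<Rightarrow> 'a" where
  "val c T i = lam c (sig i) \<oplus> sig ((\<Sum>T - i) mod g)"
definition word :: "'a \<times> 'a \<times> 'a \<Rightarrow> nat set \<Rightarrow> nat \<Rightarrow> nat" where
  "word c T = (\<lambda>i. if i \<in> T then Suc (iota (val c T i)) else 0)"
definition Tr :: "nat set set" where "Tr = {T. T \<subseteq> {0..<n} \<and> card T = 3}"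
definition SSS :: "('a \<times> 'a \<times> 'a) set" where "SSS = S \<times> S \<times> S"
definition code :: "'a \<times> 'a \<times> 'a \<Rightarrow> (nat \<Rightarrow> nat) set" where "code c = word c ` Tr"

lemma g_pos: "0 < g" using n3 ng by simp

lemma sig_in: "m < g \<Longrightarrow> sig m \<in> S"
  using bij by (auto simp: bij_betw_def)

lemma sig_inj: "m < g \<Longrightarrow> m' < g \<Longrightarrow> sig m = sig m' \<Longrightarrow> m = m'"
  using bij by (auto simp: bij_betw_def inj_on_def)

lemma iota_lt: "s \<in> S \<Longrightarrow> iota s < g"
  using bij unfolding iota_def bij_betw_def
  by (metis atLeastLessThan_iff the_inv_into_into subset_refl)

lemma sig_iota: "s \<in> S \<Longrightarrow> sig (iota s) = s"
  using bij unfolding iota_def bij_betw_def by (simp add: f_the_inv_into_f)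

lemma iota_sig: "m < g \<Longrightarrow> iota (sig m) = m"
  using bij unfolding iota_def bij_betw_def by (simp add: the_inv_into_f_f)

lemma iota_inj: "s \<in> S \<Longrightarrow> t \<in> S \<Longrightarrow> iota s = iota t \<Longrightarrow> s = t"
  by (metis sig_iota)

lemma S_carr: "s \<in> S \<Longrightarrow> s \<in> carrier L" using S_sub by auto

lemma lam_in: "c \<in> SSS \<Longrightarrow> a \<in> S \<Longrightarrow> lam c a \<in> S"
  unfolding lam_def SSS_def by (auto intro!: S_add S_mult)

lemma val_in: "c \<in> SSS \<Longrightarrow> i < g \<Longrightarrow> val c T i \<in> S"
  unfolding val_def using g_pos by (auto intro!: S_add lam_in sig_in)

lemma Tr_fin: "T \<in> Tr \<Longrightarrow> finite T" unfolding Tr_def by (auto intro: finite_subset)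

lemma Tr_lt: "T \<in> Tr \<Longrightarrow> i \<in> T \<Longrightarrow> i < n" unfolding Tr_def by auto

lemma supp_word: "T \<in> Tr \<Longrightarrow> {i. i < n \<and> word c T i \<noteq> 0} = T"
  unfolding word_def Tr_def by auto

lemma word_Hq: "c \<in> SSS \<Longrightarrow> T \<in> Tr \<Longrightarrow> word c T \<in> Hq (g + 1) n 3"
proof -
  assume c: "c \<in> SSS" and T: "T \<in> Tr"
  have "word c T i < g + 1" if "i < n" for i
  proof (cases "i \<in> T")
    case True
    then have "val c T i \<in> S" using val_in[OF c] that ng by simp
    then show ?thesis using iota_lt True by (simp add: word_def)
  qed (simp add: word_def)
  moreover have "word c T i = 0" if "n \<le> i" for i
    using that T Tr_lt[OF T] by (force simp: word_def)
  moreover have "card {i. i < n \<and> word c T i \<noteq> 0} = 3"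
    using supp_word[OF T] T by (simp add: Tr_def)
  ultimately show ?thesis by (simp add: Hq_def)
qed

lemma val_inj:
  assumes T: "T \<in> Tr" and c: "c \<in> SSS" and c': "c' \<in> SSS"
    and eq: "\<And>i. i \<in> T \<Longrightarrow> val c T i = val c' T i"
  shows "c = c'"
proof -
  obtain a b d where Tabd: "T = {a, b, d}" and dd: "a \<noteq> b" "b \<noteq> d" "a \<noteq> d"
    using T unfolding Tr_def by (auto simp: card_3_iff)
  have lt: "a < g" "b < g" "d < g" using Tr_lt[OF T] ng Tabd by force+
  have sc: "sig a \<in> carrier L" "sig b \<in> carrier L" "sig d \<in> carrier L"
    using lt by (auto intro: S_carr sig_in)
  have sd: "sig a \<noteq> sig b" "sig a \<noteq> sig d" "sig b \<noteq> sig d"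
    using dd lt sig_inj by metis+
  obtain x y z where cx: "c = (x, y, z)" by (cases c) auto
  obtain x' y' z' where cx': "c' = (x', y', z')" by (cases c') auto
  have xc: "x \<in> carrier L" "y \<in> carrier L" "z \<in> carrier L" "x' \<in> carrier L" "y' \<in> carrier L" "z' \<in> carrier L"
    using c c' cx cx' by (auto simp: SSS_def intro: S_carr)
  have L: "lam c (sig i) = lam c' (sig i)" if "i \<in> T" for i
  proof -
    have ilt: "i < g" using that Tr_lt[OF T] ng by force
    have "lam c (sig i) \<in> carrier L" "lam c' (sig i) \<in> carrier L"
      using lam_in[OF c] lam_in[OF c'] sig_in[OF ilt] S_carr by auto
    moreover have "sig ((\<Sum>T - i) mod g) \<in> carrier L"
      using sig_in S_carr g_pos by auto
    ultimately show ?thesis using eq[OF that] unfolding val_def by simp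
  qed
  have "x = x' \<and> y = y' \<and> z = z'"
    by (rule vand3[OF xc sc sd]) (use L[of a] L[of b] L[of d] Tabd in \<open>auto simp: lam_def cx cx'\<close>)
  then show ?thesis by (simp add: cx cx')
qed

lemma word_inj:
  assumes c: "c \<in> SSS" and c': "c' \<in> SSS" and T: "T \<in> Tr" and T': "T' \<in> Tr"
    and eq: "word c T = word c' T'"
  shows "c = c' \<and> T = T'"
proof -
  have TT: "T = T'" using supp_word[OF T, of c] supp_word[OF T', of c'] eq by simp
  have "val c T i = val c' T i" if "i \<in> T" for i
  proof -
    have ilt: "i < g" using that Tr_lt[OF T] ng by force
    have "Suc (iota (val c T i)) = Suc (iota (val c' T i))"
      using fun_cong[OF eq, of i] that TT by (simp add: word_def)
    then show ?thesis using iota_inj val_in[OF c ilt] val_in[OF c' ilt] by simp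
  qed
  then show ?thesis using val_inj[OF T c c'] TT by simp
qed

lemma card_SSS: "card SSS = g ^ 3"
proof -
  have "card S = g" using bij by (simp add: bij_betw_same_card[symmetric])
  then show ?thesis by (simp add: SSS_def card_cartesian_product power3_eq_cube)
qed

lemma fin_S: "finite S"
  using bij bij_betw_finite by blast

lemma word_surj:
  assumes w: "w \<in> Hq (g + 1) n 3"
  shows "\<exists>c\<in>SSS. \<exists>T\<in>Tr. w = word c T"
proof -
  define T where "T = {i. i < n \<and> w i \<noteq> 0}"
  have T: "T \<in> Tr" using w by (auto simp: T_def Tr_def Hq_def)
  have wlt: "w i < g + 1" if "i < n" for i using w that by (simp add: Hq_def)
  have w0: "w i = 0" if "i \<notin> T" for i
    using w that by (cases "i < n") (auto simp: T_def Hq_def)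
  define Phi where "Phi = (\<lambda>c. restrict (val c T) T)"
  have sub: "Phi ` SSS \<subseteq> PiE T (\<lambda>_. S)"
  proof
    fix f assume "f \<in> Phi ` SSS"
    then obtain c where c: "c \<in> SSS" and f: "f = Phi c" by auto
    have "val c T i \<in> S" if "i \<in> T" for i
      using val_in[OF c] Tr_lt[OF T that] ng by simp
    then show "f \<in> PiE T (\<lambda>_. S)" unfolding f Phi_def by auto
  qed
  have inj: "inj_on Phi SSS"
  proof
    fix c c' assume "c \<in> SSS" "c' \<in> SSS" "Phi c = Phi c'"
    then have "val c T i = val c' T i" if "i \<in> T" for i
    proof -
      have "restrict (val c T) T i = restrict (val c' T) T i"
        using \<open>Phi c = Phi c'\<close> by (simp add: Phi_def)
      then show ?thesis using that by simp
    qed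
    then show "c = c'" using val_inj[OF T] \<open>c \<in> SSS\<close> \<open>c' \<in> SSS\<close> by blast
  qed
  have cardP: "card (PiE T (\<lambda>_. S)) = g ^ 3"
  proof -
    have "card S = g" using bij by (simp add: bij_betw_same_card[symmetric])
    have "card (PiE T (\<lambda>_. S)) = (\<Prod>i\<in>T. card S)" by (rule card_PiE[OF Tr_fin[OF T]])
    also have "\<dots> = card S ^ card T" by simp
    finally show ?thesis using \<open>card S = g\<close> T by (simp add: Tr_def)
  qed
  have "Phi ` SSS = PiE T (\<lambda>_. S)"
  proof (rule card_subset_eq)
    show "finite (PiE T (\<lambda>_. S))" using Tr_fin[OF T] fin_S by (simp add: finite_PiE)
    show "card (Phi ` SSS) = card (PiE T (\<lambda>_. S))" using card_image[OF inj] card_SSS cardP by simp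
  qed (rule sub)
  moreover have "restrict (\<lambda>i. sig (w i - 1)) T \<in> PiE T (\<lambda>_. S)"
  proof -
    have "sig (w i - 1) \<in> S" if "i \<in> T" for i
    proof -
      have "i < n" "w i \<noteq> 0" using that by (simp_all add: T_def)
      then have "w i - 1 < g" using wlt[of i] by linarith
      then show ?thesis by (rule sig_in)
    qed
    then show ?thesis by auto
  qed
  ultimately have "restrict (\<lambda>i. sig (w i - 1)) T \<in> Phi ` SSS" by simp
  then obtain c where c: "c \<in> SSS" and Pc: "Phi c = restrict (\<lambda>i. sig (w i - 1)) T"
    by (auto simp del: restrict_apply)
  have "w = word c T"
  proof
    fix i
    show "w i = word c T i"
    proof (cases "i \<in> T")
      case True
      then have "val c T i = sig (w i - 1)" using fun_cong[OF Pc, of i] by (simp add: Phi_def)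
      moreover have "i < n" "w i \<noteq> 0" using True by (simp_all add: T_def)
      moreover have "w i - 1 < g" using calculation(2,3) wlt[of i] by linarith
      ultimately show ?thesis using True by (simp add: word_def iota_sig)
    next
      case False
      then show ?thesis using w0 by (simp add: word_def)
    qed
  qed
  then show ?thesis using c T by blast
qed

lemma mod_inj_helper:
  fixes m k k' G :: nat
  assumes "k < G" "k' < G" "(m + k) mod G = (m + k') mod G"
  shows "k = k'"
proof -
  have "[m + k = m + k'] (mod G)" using assms(3) by (simp add: cong_def)
  then have "[k = k'] (mod G)" by (simp add: cong_add_lcancel_nat)
  then show ?thesis using assms(1,2) by (simp add: cong_def)
qed

lemma val_diff:
  assumes c: "c \<in> SSS" and T: "T \<in> Tr" and T': "T' \<in> Tr"
    and B2: "card (T \<inter> T') = 2" and i: "i \<in> T \<inter> T'"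
  shows "word c T i \<noteq> word c T' i"
proof -
  have fT: "finite T" "finite T'" using Tr_fin T T' by auto
  define B where "B = T \<inter> T'"
  have cT: "card T = 3" "card T' = 3" using T T' by (auto simp: Tr_def)
  have "card (T - T') = 1"
    using card_Diff_subset_Int[of T T'] fT cT B2 by simp
  then obtain k where k: "T - T' = {k}" by (auto simp: card_1_singleton_iff)
  have "card (T' - T) = 1"
    using card_Diff_subset_Int[of T' T] fT cT B2 by (simp add: Int_commute)
  then obtain k' where k': "T' - T = {k'}" by (auto simp: card_1_singleton_iff)
  have TB: "T = insert k B" and kB: "k \<notin> B" using k by (auto simp: B_def)
  have TB': "T' = insert k' B" and kB': "k' \<notin> B" using k' by (auto simp: B_def)
  have fB: "finite B" using fT by (simp add: B_def)
  have kk: "k \<noteq> k'" using k k' by auto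
  have klt: "k < g" "k' < g" using k k' Tr_lt[OF T] Tr_lt[OF T'] ng by force+
  have iB: "i \<in> B" using i by (simp add: B_def)
  have ilt: "i < g" using i Tr_lt[OF T] ng by force
  have sB: "i \<le> \<Sum>B" using member_le_sum[of i B "\<lambda>x. x"] fB iB by simp
  define m where "m = \<Sum>B - i"
  have s1: "\<Sum>T - i = m + k" using TB kB fB sB by (simp add: m_def)
  have s2: "\<Sum>T' - i = m + k'" using TB' kB' fB sB by (simp add: m_def)
  have md: "(m + k) mod g \<noteq> (m + k') mod g" using mod_inj_helper klt kk by blast
  have sd: "sig ((m + k) mod g) \<noteq> sig ((m + k') mod g)"
  proof
    assume "sig ((m + k) mod g) = sig ((m + k') mod g)"
    moreover have "(m + k) mod g < g" "(m + k') mod g < g" using g_pos by simp_all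
    ultimately show False using sig_inj md by blast
  qed
  have vd: "val c T i \<noteq> val c T' i"
  proof
    assume "val c T i = val c T' i"
    then have "lam c (sig i) \<oplus> sig ((m + k) mod g) = lam c (sig i) \<oplus> sig ((m + k') mod g)"
      by (simp add: val_def s1 s2)
    moreover have "lam c (sig i) \<in> carrier L" using lam_in[OF c sig_in[OF ilt]] S_carr by simp
    moreover have "sig ((m + k) mod g) \<in> carrier L" "sig ((m + k') mod g) \<in> carrier L"
      using sig_in S_carr g_pos by auto
    ultimately show False using sd by simp
  qed
  have "iota (val c T i) \<noteq> iota (val c T' i)"
    using vd iota_inj val_in[OF c ilt] by blast
  then show ?thesis using i by (simp add: word_def)
qed

lemma dist_word:
  assumes c: "c \<in> SSS" and T: "T \<in> Tr" and T': "T' \<in> Tr" and ne: "T \<noteq> T'"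
  shows "4 \<le> hdist n (word c T) (word c T')"
proof -
  define D where "D = {i. i < n \<and> word c T i \<noteq> word c T' i}"
  have fD: "finite D" by (simp add: D_def)
  have fT: "finite T" "finite T'" using Tr_fin T T' by auto
  have cT: "card T = 3" "card T' = 3" using T T' by (auto simp: Tr_def)
  have A1: "T - T' \<subseteq> D" using Tr_lt[OF T] by (auto simp: D_def word_def)
  have A2: "T' - T \<subseteq> D" using Tr_lt[OF T'] by (auto simp: D_def word_def)
  have cB: "card (T \<inter> T') \<le> 2"
  proof (rule ccontr)
    assume "\<not> card (T \<inter> T') \<le> 2"
    moreover have "card (T \<inter> T') \<le> 3" using card_mono[OF fT(1), of "T \<inter> T'"] cT by auto
    ultimately have "card (T \<inter> T') = 3" by simp
    then have "T \<inter> T' = T" "T \<inter> T' = T'"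
      using card_subset_eq[OF fT(1), of "T \<inter> T'"] card_subset_eq[OF fT(2), of "T \<inter> T'"] cT by auto
    then show False using ne by simp
  qed
  have c1: "card (T - T') = 3 - card (T \<inter> T')"
    using card_Diff_subset_Int[of T T'] fT cT by simp
  have c2: "card (T' - T) = 3 - card (T \<inter> T')"
    using card_Diff_subset_Int[of T' T] fT cT by (simp add: Int_commute)
  have dj: "(T - T') \<inter> (T' - T) = {}" by auto
  have cU: "card ((T - T') \<union> (T' - T)) = 2 * (3 - card (T \<inter> T'))"
    using card_Un_disjoint[OF _ _ dj] fT c1 c2 by simp
  show ?thesis
  proof (cases "card (T \<inter> T') = 2")
    case False
    then have "4 \<le> card ((T - T') \<union> (T' - T))" using cU cB by simp
    also have "\<dots> \<le> card D" using A1 A2 fD by (intro card_mono) auto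
    finally show ?thesis by (simp add: hdist_def D_def)
  next
    case True
    have B: "T \<inter> T' \<subseteq> D"
    proof
      fix i assume "i \<in> T \<inter> T'"
      then show "i \<in> D" using val_diff[OF c T T' True] Tr_lt[OF T] by (auto simp: D_def)
    qed
    have dj2: "((T - T') \<union> (T' - T)) \<inter> (T \<inter> T') = {}" by auto
    have "card ((T - T') \<union> (T' - T) \<union> (T \<inter> T')) = 4"
      using card_Un_disjoint[OF _ _ dj2] fT cU True by simp
    moreover have "card ((T - T') \<union> (T' - T) \<union> (T \<inter> T')) \<le> card D"
      using A1 A2 B fD by (intro card_mono) auto
    ultimately show ?thesis by (simp add: hdist_def D_def)
  qed
qed

lemma fin_Tr: "finite Tr"
  by (rule finite_subset[of _ "Pow {0..<n}"]) (auto simp: Tr_def)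

lemma card_Tr: "card Tr = n choose 3"
  using n_subsets[of "{0..<n}" 3] by (simp add: Tr_def)

lemma Tr_ne: "Tr \<noteq> {}"
proof -
  have "{0, 1, 2} \<in> Tr" using n3 by (auto simp: Tr_def)
  then show ?thesis by auto
qed

lemma code_is_code:
  assumes c: "c \<in> SSS" shows "is_code (g + 1) n 4 3 (code c)"
  unfolding is_code_def
proof (intro conjI ballI impI)
  show "code c \<noteq> {}" using Tr_ne by (simp add: code_def)
  show "code c \<subseteq> Hq (g + 1) n 3" using word_Hq[OF c] by (auto simp: code_def)
  fix x y assume x: "x \<in> code c" and y: "y \<in> code c" and xy: "x \<noteq> y"
  from x obtain T where T: "T \<in> Tr" "x = word c T" by (auto simp: code_def)
  from y obtain T' where T': "T' \<in> Tr" "y = word c T'" by (auto simp: code_def)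
  have "T \<noteq> T'" using xy T T' by blast
  then show "4 \<le> hdist n x y" using dist_word[OF c T(1) T'(1)] T T' by simp
qed

lemma card_code:
  assumes c: "c \<in> SSS" shows "card (code c) = card Tr"
  unfolding code_def
proof (rule card_image, rule inj_onI)
  fix T T' assume "T \<in> Tr" "T' \<in> Tr" "word c T = word c T'"
  then show "T = T'" using word_inj[OF c c] by blast
qed

lemma code_upper:
  assumes C: "is_code (g + 1) n 4 3 C"
  shows "card C \<le> card Tr"
proof -
  define sp where "sp = (\<lambda>w::nat \<Rightarrow> nat. {i. i < n \<and> w i \<noteq> 0})"
  have CH: "C \<subseteq> Hq (g + 1) n 3" using C by (simp add: is_code_def)
  have sub: "sp ` C \<subseteq> Tr" using CH by (auto simp: sp_def Tr_def Hq_def)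
  have inj: "inj_on sp C"
  proof (rule inj_onI, rule ccontr)
    fix x y assume x: "x \<in> C" and y: "y \<in> C" and eq: "sp x = sp y" and ne: "x \<noteq> y"
    have mem: "i \<in> sp x" if "i < n" "x i \<noteq> y i" for i
    proof (cases "x i = 0")
      case True
      then have "i \<in> sp y" using that by (simp add: sp_def)
      then show ?thesis using eq by simp
    next
      case False
      then show ?thesis using that by (simp add: sp_def)
    qed
    moreover have "{i. i < n \<and> x i \<noteq> y i} \<subseteq> sp x" using mem by blast
    moreover have "finite (sp x)" by (simp add: sp_def)
    ultimately have "hdist n x y \<le> card (sp x)" unfolding hdist_def by (intro card_mono)
    moreover have "4 \<le> hdist n x y" using C x y ne by (simp add: is_code_def)
    moreover have "card (sp x) = 3" using CH x by (auto simp: sp_def Hq_def)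
    ultimately show False by simp
  qed
  show ?thesis by (rule card_inj_on_le[OF inj sub fin_Tr])
qed

lemma c0: "(sig 0, sig 0, sig 0) \<in> SSS"
  using sig_in[OF g_pos] by (simp add: SSS_def)

lemma Aq_val: "Aq (g + 1) n 4 3 = card Tr"
  unfolding Aq_def
proof (rule Max_eqI)
  show "finite (card ` {C. is_code (g + 1) n 4 3 C})"
  proof (rule finite_subset[of _ "{..card Tr}"])
    show "card ` {C. is_code (g + 1) n 4 3 C} \<subseteq> {..card Tr}"
    proof
      fix y assume "y \<in> card ` {C. is_code (g + 1) n 4 3 C}"
      then obtain C where "is_code (g + 1) n 4 3 C" "y = card C" by blast
      then show "y \<in> {..card Tr}" using code_upper by simp
    qed
  qed simp
  show "y \<le> card Tr" if "y \<in> card ` {C. is_code (g + 1) n 4 3 C}" for y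
  proof -
    from that obtain C where "is_code (g + 1) n 4 3 C" "y = card C" by blast
    then show ?thesis using code_upper by simp
  qed
  show "card Tr \<in> card ` {C. is_code (g + 1) n 4 3 C}"
  proof (rule image_eqI)
    show "card Tr = card (code (sig 0, sig 0, sig 0))" using card_code[OF c0] by simp
    show "code (sig 0, sig 0, sig 0) \<in> {C. is_code (g + 1) n 4 3 C}" using code_is_code[OF c0] by simp
  qed
qed

theorem toc_exists: "\<exists>P. TOC (g + 1) n 4 3 P"
proof (intro exI)
  let ?P = "code ` SSS"
  have U: "\<Union>?P = Hq (g + 1) n 3"
  proof
    show "\<Union>?P \<subseteq> Hq (g + 1) n 3" using word_Hq by (auto simp: code_def)
    show "Hq (g + 1) n 3 \<subseteq> \<Union>?P"
    proof
      fix w assume "w \<in> Hq (g + 1) n 3"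
      then obtain c T where "c \<in> SSS" "T \<in> Tr" "w = word c T" using word_surj by blast
      then show "w \<in> \<Union>?P" by (auto simp: code_def)
    qed
  qed
  have D: "disjoint ?P"
    unfolding disjoint_def
  proof (intro ballI impI)
    fix a b assume a: "a \<in> ?P" and b: "b \<in> ?P" and ab: "a \<noteq> b"
    from a obtain c where c: "c \<in> SSS" "a = code c" by blast
    from b obtain c' where c': "c' \<in> SSS" "b = code c'" by blast
    show "a \<inter> b = {}"
    proof (rule ccontr)
      assume "a \<inter> b \<noteq> {}"
      then obtain w where "w \<in> code c" "w \<in> code c'" using c c' by blast
      then obtain T T' where "T \<in> Tr" "T' \<in> Tr" "word c T = word c' T'" by (auto simp: code_def)
      then have "c = c'" using word_inj c c' by blast
      then show False using ab c c' by simp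
    qed
  qed
  have E: "{} \<notin> ?P" using Tr_ne by (auto simp: code_def)
  have O: "optimal_code (g + 1) n 4 3 C" if "C \<in> ?P" for C
  proof -
    from that obtain c where c: "c \<in> SSS" "C = code c" by blast
    show ?thesis unfolding optimal_code_def c(2) using code_is_code[OF c(1)] card_code[OF c(1)] Aq_val by simp
  qed
  show "TOC (g + 1) n 4 3 ?P"
    unfolding TOC_def partition_on_def
  proof (intro conjI ballI)
    show "\<Union>?P = Hq (g + 1) n 3" by (rule U)
    show "disjoint ?P" by (rule D)
    show "{} \<notin> ?P" by (rule E)
    show "optimal_code (g + 1) n 4 3 C" if "C \<in> ?P" for C using O[OF that] .
  qed
qed

end


theorem theorem4p9:
  fixes n g :: nat
  assumes "n \<ge> 3" and "primepow g"
    and "even g \<Longrightarrow> g \<ge> n" and "odd g \<Longrightarrow> g \<ge> n + 1"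
  shows "\<exists>P. TOC (g + 1) n 4 3 P"
proof -
  obtain p k where p: "Factorial_Ring.prime p" and k: "k > 0" and g: "g = p ^ k"
    using assms(2) by (auto simp: primepow_def)
  obtain L :: "((int list \<times> nat) multiset \<Rightarrow> int) ring" and S where
    F: "field L" and Ssub: "S \<subseteq> carrier L" and cS: "card S = p ^ k"
    and cl: "\<forall>x\<in>S. \<forall>y\<in>S. x \<oplus>\<^bsub>L\<^esub> y \<in> S \<and> x \<otimes>\<^bsub>L\<^esub> y \<in> S"
    using exists_GF[OF p, of k] k by auto
  have "p ^ k > 0" using p prime_gt_0_nat by simp
  then have "card S > 0" using cS by simp
  then have fS: "finite S" by (rule card_ge_0_finite)
  obtain sig where sig: "bij_betw sig {0..<card S} S" using ex_bij_betw_nat_finite[OF fS] by blast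
  have ng: "n \<le> g"
  proof (cases "even g")
    case True then show ?thesis using assms(3) by simp
  next
    case False then show ?thesis using assms(4) by simp
  qed
  interpret T: toc_setup L S g n sig
  proof (rule toc_setup.intro[OF F], unfold_locales)
    show "S \<subseteq> carrier L" by (rule Ssub)
    show "\<And>x y. x \<in> S \<Longrightarrow> y \<in> S \<Longrightarrow> x \<oplus>\<^bsub>L\<^esub> y \<in> S" using cl by blast
    show "\<And>x y. x \<in> S \<Longrightarrow> y \<in> S \<Longrightarrow> x \<otimes>\<^bsub>L\<^esub> y \<in> S" using cl by blast
    show "bij_betw sig {0..<g} S" using sig cS g by simp
    show "3 \<le> n" by (rule assms(1))
    show "n \<le> g" by (rule ng)
  qed
  show ?thesis by (rule T.toc_exists)
qed

end
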